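(* Let $\beta>\alpha>0$ and let $q=(q_1,q_2,q_3,q_4)\in(\mathbb{R}^2)^4$ be a convex non-collinear central configuration of the planar Newtonian 4-body problem with masses $m_1=m_2=\beta$, $m_3=m_4=\alpha$, the vertices being labelled so that $q_1,q_2,q_3,q_4$ is the cyclic order around the convex quadrilateral (so the equal masses occupy adjacent vertices). If $r_{13}=r_{24}$, then the configuration is symmetric and forms an isosceles trapezoid: the side $q_1q_2$ is parallel to the side $q_3q_4$, and $r_{14}=r_{23}$.
   Context: Bodies have positions $q_i\in\mathbb{R}^2$ and masses $m_i>0$, $i=1,\dots,4$; $r_{ij}=\|q_i-q_j\|$. The Newtonian potential is $U(q)=\sum_{i<j}m_im_j/r_{ij}$ (gravitational constant $1$). A configuration $q$ with $q_i\neq q_j$ for all $i\neq j$ and center of mass $\sum_i m_iq_i=0$ is a central configuration if there is a constant $\lambda$ with $\frac{1}{m_i}\frac{\partial U}{\partial q_i}=\lambda q_i$ for all $i$, i.e. $\sum_{j\neq i} m_j\frac{q_j-q_i}{r_{ij}^3}=\lambda q_i$. "Convex non-collinear" means the four points are the vertices of a strictly convex quadrilateral (no three of them collinear). *)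

theory Defs
  imports "HOL-Analysis.Analysis"
begin

definition cross2 :: "real^2 \<Rightarrow> real^2 \<Rightarrow> real" where
  "cross2 u v = u$1 * v$2 - u$2 * v$1"

text \<open>Central configuration of the planar Newtonian 4-body problem; bodies indexed 1..4,
  gravitational constant 1.\<close>
definition central_config4 :: "(nat \<Rightarrow> real) \<Rightarrow> (nat \<Rightarrow> real^2) \<Rightarrow> bool" where
  "central_config4 m q \<longleftrightarrow>
     (\<forall>i\<in>{1..4}. \<forall>j\<in>{1..4}. i \<noteq> j \<longrightarrow> q i \<noteq> q j) \<and>
     (\<Sum>i=1..4. m i *\<^sub>R q i) = 0 \<and>
     (\<exists>lam::real. \<forall>i\<in>{1..4}.
        (\<Sum>j\<in>{1..4} - {i}. (m j / dist (q i) (q j) ^ 3) *\<^sub>R (q j - q i)) = lam *\<^sub>R q i)"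

definition convex_quad :: "(nat \<Rightarrow> real^2) \<Rightarrow> bool" where
  "convex_quad q \<longleftrightarrow>
     (let t1 = cross2 (q 2 - q 1) (q 3 - q 2);
          t2 = cross2 (q 3 - q 2) (q 4 - q 3);
          t3 = cross2 (q 4 - q 3) (q 1 - q 4);
          t4 = cross2 (q 1 - q 4) (q 2 - q 1)
      in (t1 > 0 \<and> t2 > 0 \<and> t3 > 0 \<and> t4 > 0) \<or> (t1 < 0 \<and> t2 < 0 \<and> t3 < 0 \<and> t4 < 0))"

end

theory Submission
  imports Defs
begin


lemma gram2: fixes a1 a2 b1 b2 c1 c2 :: real
  shows "(a1*a1+a2*a2)*(b1*b1+b2*b2)*(c1*c1+c2*c2) + 2*(a1*b1+a2*b2)*(b1*c1+b2*c2)*(a1*c1+a2*c2)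
   - (a1*a1+a2*a2)*(b1*c1+b2*c2)^2 - (b1*b1+b2*b2)*(a1*c1+a2*c2)^2 - (c1*c1+c2*c2)*(a1*b1+a2*b2)^2 = 0"
  by algebra

lemma equi: fixes a1 a2 b1 b2 c1 c2 D :: real
  assumes "D > 0" "a1^2+a2^2 = D" "b1^2+b2^2 = D" "c1^2+c2^2 = D"
   "(b1-a1)^2+(b2-a2)^2 = D" "(c1-a1)^2+(c2-a2)^2 = D" "(c1-b1)^2+(c2-b2)^2 = D"
  shows False
proof -
  have ab: "a1*b1+a2*b2 = D/2" using assms by (simp add: power2_eq_square algebra_simps)
  have ac: "a1*c1+a2*c2 = D/2" using assms by (simp add: power2_eq_square algebra_simps)
  have bc: "b1*c1+b2*c2 = D/2" using assms by (simp add: power2_eq_square algebra_simps)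
  have "D*D*D + 2*(D/2)*(D/2)*(D/2) - D*(D/2)^2 - D*(D/2)^2 - D*(D/2)^2 = 0"
    using gram2[of a1 a2 b1 b2 c1 c2] ab ac bc assms(2-4) by (simp add: power2_eq_square)
  hence "D*D*D/2 = 0" by (simp add: power2_eq_square field_simps)
  thus False using assms(1) by simp
qed

lemma trap: fixes a1 a2 e1 e2 c1 c2 :: real
  assumes "e1*c2 - e2*c1 = 0"
   and "(a1*e2 - a2*e1) * ((a1+e1)*c2 - (a2+e2)*c1) > 0"
   and "(a1+e1)^2+(a2+e2)^2 = (c1-a1)^2+(c2-a2)^2"
  shows "a1^2+a2^2 = (c1-a1-e1)^2+(c2-a2-e2)^2"
proof -
  define P where "P = a1*e2 - a2*e1"
  have en: "e1*e1+e2*e2 \<noteq> 0"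
  proof
    assume "e1*e1+e2*e2 = 0"
    hence "e1 = 0 \<and> e2 = 0" using sum_squares_eq_zero_iff by blast
    thus False using assms(2) by simp
  qed
  define k where "k = (c1*e1+c2*e2)/(e1*e1+e2*e2)"
  have c1: "c1 = k*e1"
  proof -
    have "c1*(e1*e1+e2*e2) = (c1*e1+c2*e2)*e1" using assms(1)
      by algebra
    thus ?thesis using en unfolding k_def by (simp add: field_simps)
  qed
  have c2: "c2 = k*e2"
  proof -
    have "c2*(e1*e1+e2*e2) = (c1*e1+c2*e2)*e2" using assms(1)
      by algebra
    thus ?thesis using en unfolding k_def by (simp add: field_simps)
  qed
  have Q: "(a1+e1)*c2 - (a2+e2)*c1 = k*P" unfolding c1 c2 P_def by (simp add: algebra_simps)
  have "P*(k*P) > 0" using assms(2) Q P_def by simp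
  hence kpos: "k > 0"
    by (metis mult.left_commute mult_le_0_iff not_less zero_le_square power2_eq_square)
  have h: "2*(a1*e1+a2*e2)*(1+k) = (k-1)*(1+k)*(e1*e1+e2*e2)"
    using assms(3) unfolding c1 c2 power2_eq_square by algebra
  have h2: "2*(a1*e1+a2*e2) = (k-1)*(e1*e1+e2*e2)"
    using h kpos by (metis mult.commute mult_right_cancel add_pos_pos zero_less_one less_irrefl mult.assoc)
  show ?thesis unfolding c1 c2 power2_eq_square using h2 by algebra
qed

lemma dist2: "dist (u::real^2) v ^ 2 = (u$1-v$1)^2 + (u$2-v$2)^2"
  unfolding dist_vec_def L2_set_def sum_2 dist_real_def by simp

theorem theorem1p1:
  fixes alpha beta :: real and m :: "nat \<Rightarrow> real" and q :: "nat \<Rightarrow> real^2"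
  assumes "0 < alpha" and "alpha < beta"
    and "m 1 = beta" and "m 2 = beta" and "m 3 = alpha" and "m 4 = alpha"
    and "central_config4 m q"
    and "convex_quad q"
    and "dist (q 1) (q 3) = dist (q 2) (q 4)"
  shows "cross2 (q 2 - q 1) (q 4 - q 3) = 0 \<and> dist (q 1) (q 4) = dist (q 2) (q 3)"
proof -
  define al where "al = alpha"
  define be where "be = beta"
  have ms: "m 1 = be" "m 2 = be" "m 3 = al" "m 4 = al" using assms(3-6) al_def be_def by auto
  have ms0: "m (Suc 0) = be" using ms(1) by simp
  have alp: "0 < al" and albe: "al < be" using assms(1,2) al_def be_def by auto
  from assms(7) obtain lam where
    dis: "\<forall>i\<in>{1..4}. \<forall>j\<in>{1..4}. i \<noteq> j \<longrightarrow> q i \<noteq> q j" and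
    com: "(\<Sum>i=1..4. m i *\<^sub>R q i) = 0" and
    eq: "\<forall>i\<in>{1..4}. (\<Sum>j\<in>{1..4} - {i}. (m j / dist (q i) (q j) ^ 3) *\<^sub>R (q j - q i)) = lam *\<^sub>R q i"
    unfolding central_config4_def by blast
  have s4: "{1..4::nat} = {1,2,3,4}" by auto
  have d1: "{1..4::nat} - {1} = {2,3,4}" by auto
  have d2: "{1..4::nat} - {2} = {1,3,4}" by auto
  have d3: "{1..4::nat} - {3} = {1,2,4}" by auto
  have d4: "{1..4::nat} - {4} = {1,2,3}" by auto
  have E1: "(m 2 / dist (q 1) (q 2) ^ 3) *\<^sub>R (q 2 - q 1) + (m 3 / dist (q 1) (q 3) ^ 3) *\<^sub>R (q 3 - q 1) + (m 4 / dist (q 1) (q 4) ^ 3) *\<^sub>R (q 4 - q 1) = lam *\<^sub>R q 1"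
    using eq[rule_format, of 1, unfolded d1] by (simp add: add.assoc)
  have E2: "(m 1 / dist (q 2) (q 1) ^ 3) *\<^sub>R (q 1 - q 2) + (m 3 / dist (q 2) (q 3) ^ 3) *\<^sub>R (q 3 - q 2) + (m 4 / dist (q 2) (q 4) ^ 3) *\<^sub>R (q 4 - q 2) = lam *\<^sub>R q 2"
    using eq[rule_format, of 2, unfolded d2] by (simp add: add.assoc)
  have E3: "(m 1 / dist (q 3) (q 1) ^ 3) *\<^sub>R (q 1 - q 3) + (m 2 / dist (q 3) (q 2) ^ 3) *\<^sub>R (q 2 - q 3) + (m 4 / dist (q 3) (q 4) ^ 3) *\<^sub>R (q 4 - q 3) = lam *\<^sub>R q 3"
    using eq[rule_format, of 3, unfolded d3] by (simp add: add.assoc)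
  have E4: "(m 1 / dist (q 4) (q 1) ^ 3) *\<^sub>R (q 1 - q 4) + (m 2 / dist (q 4) (q 2) ^ 3) *\<^sub>R (q 2 - q 4) + (m 3 / dist (q 4) (q 3) ^ 3) *\<^sub>R (q 3 - q 4) = lam *\<^sub>R q 4"
    using eq[rule_format, of 4, unfolded d4] by (simp add: add.assoc)
  have com': "m 1 *\<^sub>R q 1 + m 2 *\<^sub>R q 2 + m 3 *\<^sub>R q 3 + m 4 *\<^sub>R q 4 = 0"
    using com unfolding s4 by (simp add: add.assoc)
  define x1 where "x1 = q 1 $ 1"
  define x2 where "x2 = q 2 $ 1"
  define x3 where "x3 = q 3 $ 1"
  define x4 where "x4 = q 4 $ 1"
  define y1 where "y1 = q 1 $ 2"
  define y2 where "y2 = q 2 $ 2"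
  define y3 where "y3 = q 3 $ 2"
  define y4 where "y4 = q 4 $ 2"
  note x_defs = x1_def x2_def x3_def x4_def
  note y_defs = y1_def y2_def y3_def y4_def
  define r12 where "r12 = dist (q 1) (q 2)"
  define r13 where "r13 = dist (q 1) (q 3)"
  define r14 where "r14 = dist (q 1) (q 4)"
  define r23 where "r23 = dist (q 2) (q 3)"
  define r24 where "r24 = dist (q 2) (q 4)"
  define r34 where "r34 = dist (q 3) (q 4)"
  note r_defs = r12_def r13_def r14_def r23_def r24_def r34_def
  have COMx: "be*x1+be*x2+al*x3+al*x4 = 0"
    using arg_cong[OF com', of "\<lambda>v. v$1"] by (simp add: x_defs ms ms0)
  have COMy: "be*y1+be*y2+al*y3+al*y4 = 0"
    using arg_cong[OF com', of "\<lambda>v. v$2"] by (simp add: y_defs ms ms0)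
  define M where "M = 2*al+2*be"
  have Mpos: "M > 0" using alp albe M_def by simp
  define mu where "mu = - lam / M"
  have mM: "mu*M = -lam" using Mpos mu_def by simp
  define s12 where "s12 = 1/r12^3"
  define s13 where "s13 = 1/r13^3"
  define s14 where "s14 = 1/r14^3"
  define s23 where "s23 = 1/r23^3"
  define s24 where "s24 = 1/r24^3"
  define s34 where "s34 = 1/r34^3"
  note s_defs = s12_def s13_def s14_def s23_def s24_def s34_def
  define t12 where "t12 = s12 - mu"
  define t13 where "t13 = s13 - mu"
  define t14 where "t14 = s14 - mu"
  define t23 where "t23 = s23 - mu"
  define t24 where "t24 = s24 - mu"
  define t34 where "t34 = s34 - mu"
  note t_defs = t12_def t13_def t14_def t23_def t24_def t34_def
  have E1x: "be/r12^3*(x2-x1) + al/r13^3*(x3-x1) + al/r14^3*(x4-x1) = lam*x1"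
    using arg_cong[OF E1, of "\<lambda>v. v$1"] by (simp add: x_defs r_defs ms ms0 dist_commute)
  have L1x: "be*(x2-x1) + al*(x3-x1) + al*(x4-x1) = -M*x1" using COMx by (simp add: M_def algebra_simps)
  have T1x: "be*t12*(x2-x1) + al*t13*(x3-x1) + al*t14*(x4-x1) = 0"
  proof -
    have "be*t12*(x2-x1) + al*t13*(x3-x1) + al*t14*(x4-x1) = (be* s12*(x2-x1) + al* s13*(x3-x1) + al* s14*(x4-x1)) - mu*(be*(x2-x1) + al*(x3-x1) + al*(x4-x1))"
      by (simp add: t_defs algebra_simps)
    also have "... = lam*x1 - mu*(-M*x1)" using E1x L1x by (simp add: s_defs)
    also have "... = (lam + mu*M)*x1" by (simp add: algebra_simps)
    also have "... = 0" using mM by simp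
    finally show ?thesis .
  qed
  have E1y: "be/r12^3*(y2-y1) + al/r13^3*(y3-y1) + al/r14^3*(y4-y1) = lam*y1"
    using arg_cong[OF E1, of "\<lambda>v. v$2"] by (simp add: y_defs r_defs ms ms0 dist_commute)
  have L1y: "be*(y2-y1) + al*(y3-y1) + al*(y4-y1) = -M*y1" using COMy by (simp add: M_def algebra_simps)
  have T1y: "be*t12*(y2-y1) + al*t13*(y3-y1) + al*t14*(y4-y1) = 0"
  proof -
    have "be*t12*(y2-y1) + al*t13*(y3-y1) + al*t14*(y4-y1) = (be* s12*(y2-y1) + al* s13*(y3-y1) + al* s14*(y4-y1)) - mu*(be*(y2-y1) + al*(y3-y1) + al*(y4-y1))"
      by (simp add: t_defs algebra_simps)
    also have "... = lam*y1 - mu*(-M*y1)" using E1y L1y by (simp add: s_defs)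
    also have "... = (lam + mu*M)*y1" by (simp add: algebra_simps)
    also have "... = 0" using mM by simp
    finally show ?thesis .
  qed
  have E2x: "be/r12^3*(x1-x2) + al/r23^3*(x3-x2) + al/r24^3*(x4-x2) = lam*x2"
    using arg_cong[OF E2, of "\<lambda>v. v$1"] by (simp add: x_defs r_defs ms ms0 dist_commute)
  have L2x: "be*(x1-x2) + al*(x3-x2) + al*(x4-x2) = -M*x2" using COMx by (simp add: M_def algebra_simps)
  have T2x: "be*t12*(x1-x2) + al*t23*(x3-x2) + al*t24*(x4-x2) = 0"
  proof -
    have "be*t12*(x1-x2) + al*t23*(x3-x2) + al*t24*(x4-x2) = (be* s12*(x1-x2) + al* s23*(x3-x2) + al* s24*(x4-x2)) - mu*(be*(x1-x2) + al*(x3-x2) + al*(x4-x2))"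
      by (simp add: t_defs algebra_simps)
    also have "... = lam*x2 - mu*(-M*x2)" using E2x L2x by (simp add: s_defs)
    also have "... = (lam + mu*M)*x2" by (simp add: algebra_simps)
    also have "... = 0" using mM by simp
    finally show ?thesis .
  qed
  have E2y: "be/r12^3*(y1-y2) + al/r23^3*(y3-y2) + al/r24^3*(y4-y2) = lam*y2"
    using arg_cong[OF E2, of "\<lambda>v. v$2"] by (simp add: y_defs r_defs ms ms0 dist_commute)
  have L2y: "be*(y1-y2) + al*(y3-y2) + al*(y4-y2) = -M*y2" using COMy by (simp add: M_def algebra_simps)
  have T2y: "be*t12*(y1-y2) + al*t23*(y3-y2) + al*t24*(y4-y2) = 0"
  proof -
    have "be*t12*(y1-y2) + al*t23*(y3-y2) + al*t24*(y4-y2) = (be* s12*(y1-y2) + al* s23*(y3-y2) + al* s24*(y4-y2)) - mu*(be*(y1-y2) + al*(y3-y2) + al*(y4-y2))"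
      by (simp add: t_defs algebra_simps)
    also have "... = lam*y2 - mu*(-M*y2)" using E2y L2y by (simp add: s_defs)
    also have "... = (lam + mu*M)*y2" by (simp add: algebra_simps)
    also have "... = 0" using mM by simp
    finally show ?thesis .
  qed
  have E3x: "be/r13^3*(x1-x3) + be/r23^3*(x2-x3) + al/r34^3*(x4-x3) = lam*x3"
    using arg_cong[OF E3, of "\<lambda>v. v$1"] by (simp add: x_defs r_defs ms ms0 dist_commute)
  have L3x: "be*(x1-x3) + be*(x2-x3) + al*(x4-x3) = -M*x3" using COMx by (simp add: M_def algebra_simps)
  have T3x: "be*t13*(x1-x3) + be*t23*(x2-x3) + al*t34*(x4-x3) = 0"
  proof -
    have "be*t13*(x1-x3) + be*t23*(x2-x3) + al*t34*(x4-x3) = (be* s13*(x1-x3) + be* s23*(x2-x3) + al* s34*(x4-x3)) - mu*(be*(x1-x3) + be*(x2-x3) + al*(x4-x3))"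
      by (simp add: t_defs algebra_simps)
    also have "... = lam*x3 - mu*(-M*x3)" using E3x L3x by (simp add: s_defs)
    also have "... = (lam + mu*M)*x3" by (simp add: algebra_simps)
    also have "... = 0" using mM by simp
    finally show ?thesis .
  qed
  have E3y: "be/r13^3*(y1-y3) + be/r23^3*(y2-y3) + al/r34^3*(y4-y3) = lam*y3"
    using arg_cong[OF E3, of "\<lambda>v. v$2"] by (simp add: y_defs r_defs ms ms0 dist_commute)
  have L3y: "be*(y1-y3) + be*(y2-y3) + al*(y4-y3) = -M*y3" using COMy by (simp add: M_def algebra_simps)
  have T3y: "be*t13*(y1-y3) + be*t23*(y2-y3) + al*t34*(y4-y3) = 0"
  proof -
    have "be*t13*(y1-y3) + be*t23*(y2-y3) + al*t34*(y4-y3) = (be* s13*(y1-y3) + be* s23*(y2-y3) + al* s34*(y4-y3)) - mu*(be*(y1-y3) + be*(y2-y3) + al*(y4-y3))"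
      by (simp add: t_defs algebra_simps)
    also have "... = lam*y3 - mu*(-M*y3)" using E3y L3y by (simp add: s_defs)
    also have "... = (lam + mu*M)*y3" by (simp add: algebra_simps)
    also have "... = 0" using mM by simp
    finally show ?thesis .
  qed
  have E4x: "be/r14^3*(x1-x4) + be/r24^3*(x2-x4) + al/r34^3*(x3-x4) = lam*x4"
    using arg_cong[OF E4, of "\<lambda>v. v$1"] by (simp add: x_defs r_defs ms ms0 dist_commute)
  have L4x: "be*(x1-x4) + be*(x2-x4) + al*(x3-x4) = -M*x4" using COMx by (simp add: M_def algebra_simps)
  have T4x: "be*t14*(x1-x4) + be*t24*(x2-x4) + al*t34*(x3-x4) = 0"
  proof -
    have "be*t14*(x1-x4) + be*t24*(x2-x4) + al*t34*(x3-x4) = (be* s14*(x1-x4) + be* s24*(x2-x4) + al* s34*(x3-x4)) - mu*(be*(x1-x4) + be*(x2-x4) + al*(x3-x4))"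
      by (simp add: t_defs algebra_simps)
    also have "... = lam*x4 - mu*(-M*x4)" using E4x L4x by (simp add: s_defs)
    also have "... = (lam + mu*M)*x4" by (simp add: algebra_simps)
    also have "... = 0" using mM by simp
    finally show ?thesis .
  qed
  have E4y: "be/r14^3*(y1-y4) + be/r24^3*(y2-y4) + al/r34^3*(y3-y4) = lam*y4"
    using arg_cong[OF E4, of "\<lambda>v. v$2"] by (simp add: y_defs r_defs ms ms0 dist_commute)
  have L4y: "be*(y1-y4) + be*(y2-y4) + al*(y3-y4) = -M*y4" using COMy by (simp add: M_def algebra_simps)
  have T4y: "be*t14*(y1-y4) + be*t24*(y2-y4) + al*t34*(y3-y4) = 0"
  proof -
    have "be*t14*(y1-y4) + be*t24*(y2-y4) + al*t34*(y3-y4) = (be* s14*(y1-y4) + be* s24*(y2-y4) + al* s34*(y3-y4)) - mu*(be*(y1-y4) + be*(y2-y4) + al*(y3-y4))"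
      by (simp add: t_defs algebra_simps)
    also have "... = lam*y4 - mu*(-M*y4)" using E4y L4y by (simp add: s_defs)
    also have "... = (lam + mu*M)*y4" by (simp add: algebra_simps)
    also have "... = 0" using mM by simp
    finally show ?thesis .
  qed

  have inv3: "\<And>a b::real. 0 < a \<Longrightarrow> 0 < b \<Longrightarrow> 1/a^3 = 1/b^3 \<Longrightarrow> a = b"
  proof -
    fix a b :: real assume "0 < a" "0 < b" "1/a^3 = 1/b^3"
    hence "a^3 = b^3" by (simp add: field_simps)
    thus "a = b" using \<open>0 < a\<close> \<open>0 < b\<close> by (metis less_imp_le power_eq_imp_eq_base zero_less_numeral)
  qed
  have rpos: "r12 > 0" "r13 > 0" "r14 > 0" "r23 > 0" "r24 > 0" "r34 > 0"
    using dis unfolding r_defs by auto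
  have rsq: "r12^2 = (x1-x2)^2+(y1-y2)^2" "r13^2 = (x1-x3)^2+(y1-y3)^2" "r14^2 = (x1-x4)^2+(y1-y4)^2"
     "r23^2 = (x2-x3)^2+(y2-y3)^2" "r24^2 = (x2-x4)^2+(y2-y4)^2" "r34^2 = (x3-x4)^2+(y3-y4)^2"
    unfolding r_defs x_defs y_defs dist2 by simp_all
  define P where "P = (x2-x1)*(y3-y1) - (y2-y1)*(x3-x1)"
  define Q where "Q = (x3-x1)*(y4-y1) - (y3-y1)*(x4-x1)"
  define R where "R = (x2-x1)*(y4-y1) - (y2-y1)*(x4-x1)"
  define S where "S = (x3-x2)*(y4-y2) - (y3-y2)*(x4-x2)"
  have c1: "cross2 (q 2 - q 1) (q 3 - q 2) = P" unfolding cross2_def P_def x_defs y_defs by (simp add: algebra_simps)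
  have c2: "cross2 (q 3 - q 2) (q 4 - q 3) = S" unfolding cross2_def S_def x_defs y_defs by (simp add: algebra_simps)
  have c3: "cross2 (q 4 - q 3) (q 1 - q 4) = Q" unfolding cross2_def Q_def x_defs y_defs by (simp add: algebra_simps)
  have c4: "cross2 (q 1 - q 4) (q 2 - q 1) = R" unfolding cross2_def R_def x_defs y_defs by (simp add: algebra_simps)
  have cg: "cross2 (q 2 - q 1) (q 4 - q 3) = R - P" unfolding cross2_def R_def P_def x_defs y_defs by (simp add: algebra_simps)
  have cv: "(P>0 \<and> S>0 \<and> Q>0 \<and> R>0) \<or> (P<0 \<and> S<0 \<and> Q<0 \<and> R<0)"
    using assms(8) unfolding convex_quad_def Let_def c1 c2 c3 c4 .
  have nz: "P \<noteq> 0" "Q \<noteq> 0" "R \<noteq> 0" "S \<noteq> 0" using cv by auto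
  have PQpos: "P*Q > 0" using cv by (auto simp: mult_pos_pos mult_neg_neg)
  have ca: "al*(t13*P + t14*R) = 0" using T1x T1y unfolding P_def R_def by algebra
  have cb: "be*(t14*Q + t24*S) = 0" using T4x T4y unfolding Q_def S_def by algebra
  have cd: "al*(t23*P + t24*R) = 0" using T2x T2y unfolding P_def R_def by algebra
  have ce: "be*t12*P - al*t14*Q = 0" using T1x T1y unfolding P_def Q_def by algebra
  have cf: "be*t13*P + al*t34*S = 0" using T3x T3y unfolding P_def S_def by algebra
  have ident: "P + Q = R + S" unfolding P_def Q_def R_def S_def by algebra
  have a': "t13*P + t14*R = 0" using ca alp by simp
  have b': "t14*Q + t24*S = 0" using cb alp albe by simp
  have d': "t23*P + t24*R = 0" using cd alp by simp
  have r1324: "r13 = r24" using assms(9) r_defs by simp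
  have t24e: "t24 = t13" unfolding t_defs s_defs r1324 ..
  show ?thesis
  proof (cases "t13 = 0")
    case True
    have "t14 = 0" using a' True nz by simp
    have "t23 = 0" using d' True t24e nz by simp
    have "t12 = 0" using ce \<open>t14 = 0\<close> nz alp albe by simp
    have "t34 = 0" using cf True nz alp by simp
    have "s13 = s12" "s14 = s12" "s23 = s12" "s24 = s12" "s34 = s12"
      using True t24e \<open>t14 = 0\<close> \<open>t23 = 0\<close> \<open>t12 = 0\<close> \<open>t34 = 0\<close> unfolding t_defs by simp_all
    hence req: "r13 = r12" "r14 = r12" "r23 = r12" "r24 = r12" "r34 = r12"
      using inv3[OF rpos(2) rpos(1)] inv3[OF rpos(3) rpos(1)] inv3[OF rpos(4) rpos(1)]
        inv3[OF rpos(5) rpos(1)] inv3[OF rpos(6) rpos(1)] unfolding s_defs by simp_all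
    have False
    proof (rule equi[of "r12^2" "x2-x1" "y2-y1" "x3-x1" "y3-y1" "x4-x1" "y4-y1"])
      show "0 < r12^2" using rpos by simp
      show "(x2-x1)^2 + (y2-y1)^2 = r12^2" using rsq by (simp add: power2_eq_square algebra_simps)
      show "(x3-x1)^2 + (y3-y1)^2 = r12^2" using rsq req by (simp add: power2_eq_square algebra_simps)
      show "(x4-x1)^2 + (y4-y1)^2 = r12^2" using rsq req by (simp add: power2_eq_square algebra_simps)
      show "(x3-x1-(x2-x1))^2 + (y3-y1-(y2-y1))^2 = r12^2" using rsq req by (simp add: power2_eq_square algebra_simps)
      show "(x4-x1-(x2-x1))^2 + (y4-y1-(y2-y1))^2 = r12^2" using rsq req by (simp add: power2_eq_square algebra_simps)
      show "(x4-x1-(x3-x1))^2 + (y4-y1-(y3-y1))^2 = r12^2" using rsq req by (simp add: power2_eq_square algebra_simps)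
    qed
    thus ?thesis ..
  next
    case False
    have "t13*(P*Q - R*S) = 0" using a' b' t24e by algebra
    hence PQRS: "P*Q = R*S" using False by simp
    have "(P-R)*(P-S) = 0" using PQRS ident by algebra
    hence "P = R \<or> P = S" by simp
    thus ?thesis
    proof
      assume PR: "P = R"
      have "(t14 + t13)*R = 0" using a' PR by (simp add: algebra_simps)
      hence "t14 = -t13" using nz by simp
      moreover have "(t23 + t13)*R = 0" using d' t24e PR by (simp add: algebra_simps)
      hence "t23 = -t13" using nz by simp
      ultimately have "s14 = s23" unfolding t_defs by simp
      hence "r14 = r23" using inv3[OF rpos(3) rpos(4)] unfolding s_defs by simp
      thus ?thesis using cg PR r_defs by simp
    next
      assume PS: "P = S"
      have QR: "Q = R" using PS ident by simp
      have h1: "be*t12 = -al*t13"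
      proof -
        have tq: "t14*Q = -t13*P" using a' QR by (simp add: algebra_simps)
        have "be*t12*P = al*(t14*Q)" using ce by (simp add: algebra_simps)
        also have "... = -al*t13*P" using tq by simp
        finally have "be*t12*P = -al*t13*P" .
        hence "(be*t12 + al*t13)*P = 0" by (simp add: algebra_simps)
        hence "be*t12 + al*t13 = 0" using nz by simp
        thus ?thesis by simp
      qed
      have h2: "al*t34 = -be*t13"
      proof -
        have "(al*t34 + be*t13)*P = 0" using cf PS by (simp add: algebra_simps)
        hence "al*t34 + be*t13 = 0" using nz by simp
        thus ?thesis by simp
      qed
      have "(x2-x1)^2+(y2-y1)^2 = (x4-x1-(x2-x1)-(x3-x2))^2+(y4-y1-(y2-y1)-(y3-y2))^2"
      proof (rule trap)
        show "(x3-x2)*(y4-y1) - (y3-y2)*(x4-x1) = 0" using QR unfolding Q_def R_def by algebra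
        have "(x2-x1)*(y3-y2) - (y2-y1)*(x3-x2) = P" unfolding P_def by algebra
        moreover have "(x2-x1+(x3-x2))*(y4-y1) - (y2-y1+(y3-y2))*(x4-x1) = Q" unfolding Q_def by algebra
        ultimately show "((x2-x1)*(y3-y2) - (y2-y1)*(x3-x2)) * ((x2-x1+(x3-x2))*(y4-y1) - (y2-y1+(y3-y2))*(x4-x1)) > 0"
          using PQpos by simp
        show "(x2-x1+(x3-x2))^2+(y2-y1+(y3-y2))^2 = (x4-x1-(x2-x1))^2+(y4-y1-(y2-y1))^2"
          using rsq r1324 by (simp add: power2_eq_square algebra_simps)
      qed
      hence "r12^2 = r34^2" using rsq by (simp add: power2_eq_square algebra_simps)
      hence "r12 = r34" using rpos by (simp add: power2_eq_iff_nonneg less_imp_le)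
      hence "t12 = t34" unfolding t_defs s_defs by simp
      hence "be*(be*t12) = al*(al*t12)" using h1 h2 by (simp add: algebra_simps)
      hence "(be*be - al*al)*t12 = 0" by (simp add: algebra_simps)
      moreover have "be*be - al*al > 0" using alp albe by (simp add: mult_strict_mono)
      ultimately have "t12 = 0" by simp
      hence "t13 = 0" using h1 alp by simp
      thus ?thesis using False by simp
    qed
  qed
qed

end
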